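(* Let $n\ge2$ and $n\in\{p,p+1\}$ for a prime $p$. Then: (i) $p$ is an isolated vertex of $\mathcal O_0(S_n)$, and the type $[1^{n-p},p]$ is an isolated vertex of $P_0(\mathcal T(S_n))$; (ii) every vertex $[\psi]$ of $\widetilde P_0(S_n)$ with $o(\psi)=p$ is isolated in $\widetilde P_0(S_n)$; (iii) the number of components of $\widetilde P_0(S_n)$ containing vertices of order $p$ is $(p-2)!$ if $n=p$ and $(p+1)(p-2)!$ if $n=p+1$.
   Context: $\widetilde P_0(G)$: vertex set $\{[x]:x\in G\setminus\{1\}\}$ with $[x]=\{y:\langle y\rangle=\langle x\rangle\}$, distinct $[x],[y]$ adjacent iff some representatives are one a positive power of the other. $\mathcal O_0(G)$: vertices the element orders $\ne1$, distinct $m,m'$ adjacent iff one divides the other. For $\psi\in S_n$, $T_\psi$ is the partition of $n$ given by orbit lengths of $\langle\psi\rangle$; for $T=[m_1^{t_1},\dots,m_k^{t_k}]$, $T^a=[(m_i/\gcd(a,m_i))^{t_i\gcd(a,m_i)}]_i$. $P_0(\mathcal T(S_n))$: vertices the partitions of $n$ other than $[1^n]$, distinct $T,T'$ adjacent iff one is a power of the other. *)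

theory Defs
  imports "HOL-Algebra.Algebra" "HOL-Library.Multiset"
begin

definition isolated_in :: "'v set \<Rightarrow> ('v \<Rightarrow> 'v \<Rightarrow> bool) \<Rightarrow> 'v \<Rightarrow> bool" where
  "isolated_in V adj v \<longleftrightarrow> v \<in> V \<and> (\<forall>w\<in>V. \<not> adj v w)"

definition component_of :: "'v set \<Rightarrow> ('v \<Rightarrow> 'v \<Rightarrow> bool) \<Rightarrow> 'v \<Rightarrow> 'v set" where
  "component_of V adj v = {w. (\<lambda>a b. a \<in> V \<and> b \<in> V \<and> adj a b)\<^sup>*\<^sup>* v w}"

definition components :: "'v set \<Rightarrow> ('v \<Rightarrow> 'v \<Rightarrow> bool) \<Rightarrow> 'v set set" where
  "components V adj = component_of V adj ` V"

definition pclass :: "('a, 'b) monoid_scheme \<Rightarrow> 'a \<Rightarrow> 'a set" where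
  "pclass G x = {y \<in> carrier G. generate G {y} = generate G {x}}"

definition rpg_vertices :: "('a, 'b) monoid_scheme \<Rightarrow> 'a set set" where
  "rpg_vertices G = {pclass G x | x. x \<in> carrier G \<and> x \<noteq> one G}"

definition rpg_adj :: "('a, 'b) monoid_scheme \<Rightarrow> 'a set \<Rightarrow> 'a set \<Rightarrow> bool" where
  "rpg_adj G A B \<longleftrightarrow> A \<noteq> B \<and>
     (\<exists>x\<in>A. \<exists>y\<in>B. (\<exists>k::nat. k > 0 \<and> x = pow G y k) \<or> (\<exists>k::nat. k > 0 \<and> y = pow G x k))"

definition og_vertices :: "('a, 'b) monoid_scheme \<Rightarrow> nat set" where
  "og_vertices G = {group.ord G x | x. x \<in> carrier G} - {1}"

definition og_adj :: "nat \<Rightarrow> nat \<Rightarrow> bool" where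
  "og_adj m m' \<longleftrightarrow> m \<noteq> m' \<and> (m dvd m' \<or> m' dvd m)"

text \<open>Types (partitions of n); \<open>P_0(T(S_n))\<close> has all partitions of n except \<open>[1^n]\<close> as vertices.\<close>
definition is_partition :: "nat \<Rightarrow> nat multiset \<Rightarrow> bool" where
  "is_partition n T \<longleftrightarrow> (\<forall>m\<in>#T. m > 0) \<and> sum_mset T = n"

definition type_pow :: "nat multiset \<Rightarrow> nat \<Rightarrow> nat multiset" where
  "type_pow T a = (\<Sum>m\<in>#T. replicate_mset (gcd a m) (m div gcd a m))"

definition tg_vertices :: "nat \<Rightarrow> nat multiset set" where
  "tg_vertices n = {T. is_partition n T \<and> T \<noteq> replicate_mset n 1}"

definition tg_adj :: "nat multiset \<Rightarrow> nat multiset \<Rightarrow> bool" where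
  "tg_adj T T' \<longleftrightarrow> T \<noteq> T' \<and> (\<exists>a::nat. a > 0 \<and> (T' = type_pow T a \<or> T = type_pow T' a))"

end

theory Submission imports Defs "HOL-Combinatorics.Cycles" "HOL-Combinatorics.Multiset_Permutations" begin



lemma funpow_mod_id:
  assumes "f ^^ p = id"
  shows "f ^^ m = f ^^ (m mod p)"
proof -
  have "f ^^ m = f ^^ (m mod p + p * (m div p))" by simp
  also have "\<dots> = f ^^ (m mod p) \<circ> f ^^ (p * (m div p))"
    by (simp only: funpow_add)
  also have "\<dots> = f ^^ (m mod p) \<circ> (f ^^ p) ^^ (m div p)"
    by (simp only: funpow_mult)
  finally show ?thesis using assms by simp
qed

lemma lp_eq_p:
  assumes "Factorial_Ring.prime (p::nat)" "(\<sigma>::nat\<Rightarrow>nat) ^^ p = id" "\<sigma> a \<noteq> a" "permutation \<sigma>"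
  shows "least_power \<sigma> a = p"
proof -
  have "least_power \<sigma> a dvd p"
    using least_power_dvd[OF assms(4)] assms(2) by simp
  moreover have "least_power \<sigma> a > 1" using least_power_gt_one[OF assms(4,3)] by simp
  ultimately show ?thesis using assms(1) by (metis prime_nat_iff less_not_refl)
qed

lemma orbit_card:
  assumes "Factorial_Ring.prime (p::nat)" "(\<sigma>::nat\<Rightarrow>nat) ^^ p = id" "\<sigma> a \<noteq> a" "permutation \<sigma>"
  shows "card ((\<lambda>i. (\<sigma>^^i) a) ` {..<p}) = p"
proof -
  have "distinct (support \<sigma> a)" using cycle_of_permutation[OF assms(4)] .
  hence "distinct (map (\<lambda>i. (\<sigma>^^i) a) [0..<p])" using lp_eq_p[OF assms] by simp
  hence "inj_on (\<lambda>i. (\<sigma>^^i) a) {..<p}" by (simp add: distinct_map atLeast_upt)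
  thus ?thesis by (simp add: card_image)
qed

lemma orbit_closed:
  assumes "(\<sigma>::nat\<Rightarrow>nat) ^^ p = id" "p > 0"
  shows "(\<sigma>^^m) a \<in> (\<lambda>i. (\<sigma>^^i) a) ` {..<p}"
  using funpow_mod_id[OF assms(1), of m] assms(2) by force

lemma orbit_preimage:
  assumes "(\<sigma>::nat\<Rightarrow>nat) ^^ p = id" "p > 0" "inj \<sigma>"
    and "\<sigma> y \<in> (\<lambda>i. (\<sigma>^^i) a) ` {..<p}"
  shows "y \<in> (\<lambda>i. (\<sigma>^^i) a) ` {..<p}"
proof -
  obtain i where i: "\<sigma> y = (\<sigma>^^i) a" using assms(4) by auto
  have e: "Suc (i+p-1) = i+p" using assms(2) by simp
  have "\<sigma> ((\<sigma>^^(i+p-1)) a) = (\<sigma>^^(Suc (i+p-1))) a" by simp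
  also have "\<dots> = (\<sigma>^^(i+p)) a" by (simp only: e)
  also have "\<dots> = (\<sigma>^^i) a" using assms(1) by (simp add: funpow_add)
  finally have "y = (\<sigma>^^(i+p-1)) a" using i assms(3) by (metis injD)
  thus ?thesis using orbit_closed[OF assms(1,2)] by simp
qed




lemma orbit_subset:
  assumes "\<sigma> permutes A" "a \<in> A"
  shows "(\<lambda>i. (\<sigma>^^i) a) ` {..<p} \<subseteq> A"
  using permutes_funpow[OF assms(1)] assms(2) permutes_in_image by fastforce

lemma rest_fixed:
  assumes pr: "Factorial_Ring.prime (p::nat)" and perm: "(\<sigma>::nat\<Rightarrow>nat) permutes A" and fin: "finite A"
    and cA: "card A \<le> p + 1" and sp: "\<sigma> ^^ p = id" and mv: "\<sigma> a \<noteq> a"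
    and y: "y \<notin> (\<lambda>i. (\<sigma>^^i) a) ` {..<p}"
  shows "\<sigma> y = y"
proof (rule ccontr)
  assume ny: "\<sigma> y \<noteq> y"
  let ?O = "(\<lambda>i. (\<sigma>^^i) a) ` {..<p}"
  have p0: "p > 0" using pr prime_gt_0_nat by blast
  have yA: "y \<in> A" using ny perm permutes_not_in by metis
  have aA: "a \<in> A" using mv perm permutes_not_in by metis
  have syA: "\<sigma> y \<in> A" using yA perm permutes_in_image by metis
  have syO: "\<sigma> y \<notin> ?O" using orbit_preimage[OF sp p0 permutes_inj[OF perm]] y by blast
  have OA: "?O \<subseteq> A" using orbit_subset[OF perm aA] .
  have cO: "card ?O = p" using orbit_card[OF pr sp mv permutes_imp_permutation[OF fin perm]] .
  have "{y, \<sigma> y} \<subseteq> A - ?O" using yA syA syO y by auto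
  hence "card {y, \<sigma> y} \<le> card (A - ?O)" using fin by (intro card_mono) auto
  also have "\<dots> = card A - p" using card_Diff_subset[OF finite_subset[OF OA fin] OA] cO by simp
  finally show False using ny cA by auto
qed

lemma full_cycle:
  assumes pr: "Factorial_Ring.prime (p::nat)" and perm: "(\<sigma>::nat\<Rightarrow>nat) permutes A" and fin: "finite A"
    and cA: "card A = p" and sp: "\<sigma> ^^ p = id" and ni: "\<sigma> \<noteq> id" and x: "x \<in> A"
  shows "\<sigma> x \<noteq> x" "(\<lambda>i. (\<sigma>^^i) x) ` {..<p} = A"
proof -
  have pm: "permutation \<sigma>" using permutes_imp_permutation[OF fin perm] .
  obtain y where y: "\<sigma> y \<noteq> y" using ni by (metis eq_id_iff)
  have yA: "y \<in> A" using y perm permutes_not_in by metis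
  have Oy: "(\<lambda>i. (\<sigma>^^i) y) ` {..<p} = A"
    using orbit_subset[OF perm yA] orbit_card[OF pr sp y pm] cA fin by (simp add: card_subset_eq)
  then obtain j where j: "x = (\<sigma>^^j) y" using x by auto
  have "inj (\<sigma>^^j)" using permutes_inj[OF permutes_funpow[OF perm]] .
  moreover have "\<sigma> x = (\<sigma>^^j) (\<sigma> y)" using j by (simp add: funpow_swap1)
  ultimately show sx: "\<sigma> x \<noteq> x" using j y by (metis injD)
  show "(\<lambda>i. (\<sigma>^^i) x) ` {..<p} = A"
    using orbit_subset[OF perm x] orbit_card[OF pr sp sx pm] cA fin by (simp add: card_subset_eq)
qed




lemma cycle_list_props:
  assumes pr: "Factorial_Ring.prime (p::nat)" and d: "distinct xs" and l: "length xs = p"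
  shows "(cycle_of_list xs ^^ i) (xs ! 0) = xs ! (i mod p)"
    and "cycle_of_list xs ^^ p = id"
    and "cycle_of_list xs \<noteq> id"
proof -
  let ?c = "cycle_of_list xs"
  have p2: "p \<ge> 2" using pr prime_ge_2_nat by blast
  have rot: "(?c ^^ n) (xs ! k) = xs ! ((n + k) mod p)" if "k < p" for n k
  proof -
    have "(?c ^^ n) (xs ! k) = map (?c ^^ n) xs ! k" using that l by simp
    also have "\<dots> = rotate n xs ! k" using cyclic_rotation[OF d] by simp
    also have "\<dots> = xs ! ((n + k) mod p)" using nth_rotate[of k xs n] that l by simp
    finally show ?thesis .
  qed
  show "(?c ^^ i) (xs ! 0) = xs ! (i mod p)" using rot[of 0 i] p2 by simp
  show "?c ^^ p = id"
  proof
    fix y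
    show "(?c ^^ p) y = id y"
    proof (cases "y \<in> set xs")
      case True
      then obtain k where k: "k < p" "y = xs ! k" using l by (metis in_set_conv_nth)
      show ?thesis using rot[OF k(1), of p] k by simp
    next
      case False
      then show ?thesis using permutes_not_in[OF permutes_funpow[OF cycle_permutes[of xs]]] by simp
    qed
  qed
  have "?c (xs ! 0) = xs ! 1" using rot[of 0 1] p2 by simp
  moreover have "xs ! 1 \<noteq> xs ! 0" using d l p2 by (simp add: nth_eq_iff_index_eq)
  ultimately show "?c \<noteq> id" by auto
qed

lemma count_cycles:
  assumes pr: "Factorial_Ring.prime (p::nat)" and fin: "finite A" and cA: "card A = p" and a: "a \<in> A"
  shows "card {\<sigma>::nat\<Rightarrow>nat. \<sigma> permutes A \<and> \<sigma> \<noteq> id \<and> \<sigma> ^^ p = id} = fact (p - 1)"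
proof -
  define S where "S = {\<sigma>::nat\<Rightarrow>nat. \<sigma> permutes A \<and> \<sigma> \<noteq> id \<and> \<sigma> ^^ p = id}"
  define f where "f = (\<lambda>\<sigma>::nat\<Rightarrow>nat. map (\<lambda>i. (\<sigma>^^i) a) [0..<p])"
  define L where "L = {xs. distinct xs \<and> set xs = A \<and> hd xs = a}"
  have p2: "p \<ge> 2" using pr prime_ge_2_nat by blast
  have inj: "inj_on f S"
  proof
    fix \<sigma> \<tau> assume s: "\<sigma> \<in> S" and t: "\<tau> \<in> S" and e: "f \<sigma> = f \<tau>"
    have eq: "(\<sigma>^^i) a = (\<tau>^^i) a" if "i < p" for i
      using e that unfolding f_def map_eq_conv by auto
    show "\<sigma> = \<tau>"
    proof
      fix x
      show "\<sigma> x = \<tau> x"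
      proof (cases "x \<in> A")
        case True
        have "x \<in> (\<lambda>i. (\<sigma>^^i) a) ` {..<p}" using full_cycle(2)[OF pr _ fin cA _ _ a, of \<sigma>] s True
          unfolding S_def by auto
        then obtain i where i: "i < p" "x = (\<sigma>^^i) a" by auto
        have xt: "x = (\<tau>^^i) a" using i eq by simp
        show ?thesis
        proof (cases "Suc i < p")
          case True
          then show ?thesis using eq[OF True] i xt by simp
        next
          case False
          hence "Suc i = p" using i by simp
          hence "\<sigma> x = (\<sigma>^^p) a" "\<tau> x = (\<tau>^^p) a" using i xt by (metis comp_apply funpow.simps(2))+
          then show ?thesis using s t unfolding S_def by simp
        qed
      next
        case False
        then show ?thesis using s t unfolding S_def by (metis (mono_tags) mem_Collect_eq permutes_not_in)
      qed
    qed
  qed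
  have img: "f ` S = L"
  proof
    show "f ` S \<subseteq> L"
    proof
      fix xs assume "xs \<in> f ` S"
      then obtain \<sigma> where s: "\<sigma> \<in> S" and xs: "xs = f \<sigma>" by auto
      have st: "set xs = A" using full_cycle(2)[OF pr _ fin cA _ _ a, of \<sigma>] s xs
        unfolding S_def f_def by (auto simp: atLeast0LessThan)
      have "length xs = p" using xs f_def by simp
      hence "distinct xs" using st cA by (simp add: card_distinct)
      moreover have "hd xs = a" using xs p2 unfolding f_def by (simp add: hd_map upt_conv_Cons)
      ultimately show "xs \<in> L" using st L_def by simp
    qed
    show "L \<subseteq> f ` S"
    proof
      fix xs assume "xs \<in> L"
      hence d: "distinct xs" and st: "set xs = A" and h: "hd xs = a" unfolding L_def by auto
      have l: "length xs = p" using distinct_card[OF d] st cA by simp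
      have h0: "xs ! 0 = a" using h l p2 by (cases xs) auto
      let ?c = "cycle_of_list xs"
      have "?c \<in> S" unfolding S_def using cycle_permutes[of xs] st cycle_list_props(2,3)[OF pr d l] by simp
      moreover have "f ?c = xs"
        unfolding f_def using cycle_list_props(1)[OF pr d l] h0 l by (intro nth_equalityI) auto
      ultimately show "xs \<in> f ` S" by (metis imageI)
    qed
  qed
  have L: "L = (\<lambda>ys. a # ys) ` permutations_of_set (A - {a})"
  proof
    show "L \<subseteq> (\<lambda>ys. a # ys) ` permutations_of_set (A - {a})"
    proof
      fix xs assume "xs \<in> L"
      hence d: "distinct xs" and st: "set xs = A" and h: "hd xs = a" unfolding L_def by auto
      then obtain ys where ys: "xs = a # ys" using a by (cases xs) auto
      have an: "a \<notin> set ys" "distinct ys" using d ys by auto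
      have "set ys = A - {a}" using st ys an(1) by auto
      hence "ys \<in> permutations_of_set (A - {a})" using an(2) by (simp add: permutations_of_set_def)
      thus "xs \<in> (\<lambda>ys. a # ys) ` permutations_of_set (A - {a})" using ys by blast
    qed
    show "(\<lambda>ys. a # ys) ` permutations_of_set (A - {a}) \<subseteq> L"
    proof (rule image_subsetI)
      fix ys assume "ys \<in> permutations_of_set (A - {a})"
      hence "distinct ys" "set ys = A - {a}" by (auto simp: permutations_of_set_def)
      thus "a # ys \<in> L" using a unfolding L_def by (simp add: insert_absorb)
    qed
  qed
  have "card S = card L" using inj img by (metis card_image)
  also have "\<dots> = card (permutations_of_set (A - {a}))" unfolding L by (simp add: card_image)
  also have "\<dots> = fact (p - 1)" using fin cA a by simp
  finally show ?thesis unfolding S_def .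
qed




lemma sym_pow: "pow (sym_group n) \<sigma> k = \<sigma> ^^ k"
  by (induct k) (simp_all add: sym_group_mult sym_group_one funpow_Suc_right fun_eq_iff funpow_swap1)

lemma fin_sym: "finite (carrier (sym_group n))"
  unfolding sym_group_carrier[symmetric] by (simp add: sym_group_def finite_permutations)

lemma funpow_fix: "f z = z \<Longrightarrow> (f ^^ j) z = z"
  by (induct j) auto

lemma ord_p_iff:
  assumes pr: "Factorial_Ring.prime (p::nat)" and s: "\<sigma> \<in> carrier (sym_group n)"
  shows "group.ord (sym_group n) \<sigma> = p \<longleftrightarrow> \<sigma> \<noteq> id \<and> \<sigma> ^^ p = id"
proof -
  interpret G: group "sym_group n" by (rule sym_group_is_group)
  have p1: "p \<noteq> 1" using pr by auto
  show ?thesis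
  proof
    assume o: "G.ord \<sigma> = p"
    have "\<sigma> \<noteq> id" using G.ord_eq_1[OF s] o p1 by (simp add: sym_group_one)
    moreover have "\<sigma> ^^ p = id" using G.pow_ord_eq_1[OF s] o by (simp add: sym_pow sym_group_one)
    ultimately show "\<sigma> \<noteq> id \<and> \<sigma> ^^ p = id" by simp
  next
    assume a: "\<sigma> \<noteq> id \<and> \<sigma> ^^ p = id"
    have "G.ord \<sigma> dvd p" using G.pow_eq_id[OF s, of p] a by (simp add: sym_pow sym_group_one)
    moreover have "G.ord \<sigma> \<noteq> 1" using G.ord_eq_1[OF s] a by (simp add: sym_group_one)
    ultimately show "G.ord \<sigma> = p" using pr by (metis prime_nat_iff)
  qed
qed

lemma main_M:
  assumes pr: "Factorial_Ring.prime (p::nat)" and np: "n \<le> p + 1"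
    and s: "\<sigma> \<in> carrier (sym_group n)" and dv: "p dvd group.ord (sym_group n) \<sigma>"
  shows "group.ord (sym_group n) \<sigma> = p"
proof -
  interpret G: group "sym_group n" by (rule sym_group_is_group)
  have perm: "\<sigma> permutes {1..n}" using s sym_group_carrier by blast
  have p2: "p \<ge> 2" using pr prime_ge_2_nat by blast
  define m where "m = G.ord \<sigma>"
  have m1: "m \<ge> 1" using G.ord_ge_1[OF fin_sym s] m_def by simp
  obtain k where mk: "m = p * k" using dv m_def by (auto elim: dvdE)
  have k0: "k > 0" using mk m1 by (cases k) auto
  define \<tau> where "\<tau> = \<sigma> ^^ k"
  have sm: "\<sigma> ^^ m = id" using G.pow_ord_eq_1[OF s] m_def by (simp add: sym_pow sym_group_one)
  have tp: "\<tau> ^^ p = id" using sm mk by (simp add: \<tau>_def funpow_mult mult.commute)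
  have tperm: "\<tau> permutes {1..n}" using permutes_funpow[OF perm] \<tau>_def by simp
  have tni: "\<tau> \<noteq> id"
  proof
    assume "\<tau> = id"
    hence "m dvd k" using G.pow_eq_id[OF s, of k] m_def by (simp add: sym_pow sym_group_one \<tau>_def)
    hence "p * k \<le> k" using mk k0 by (simp add: dvd_imp_le)
    thus False using k0 p2 by simp
  qed
  obtain x where x: "\<tau> x \<noteq> x" using tni by (metis eq_id_iff)
  have xA: "x \<in> {1..n}" using x tperm permutes_not_in by metis
  define Ob where "Ob = (\<lambda>i. (\<tau>^^i) x) ` {..<p}"
  have fin: "finite {1..n}" by simp
  have cA: "card {1..n} \<le> p + 1" using np by simp
  have R: "\<tau> y = y" if "y \<notin> Ob" for y
    using rest_fixed[OF pr tperm fin cA tp x] that Ob_def by blast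
  have tpm: "permutation \<tau>" using permutes_imp_permutation[OF fin tperm] .
  have cOb: "card Ob = p" using orbit_card[OF pr tp x tpm] Ob_def by simp
  have OA: "Ob \<subseteq> {1..n}" using orbit_subset[OF tperm xA] Ob_def by simp
  have Omv: "\<tau> z \<noteq> z" if zO: "z \<in> Ob" for z
  proof -
    obtain i where z: "z = (\<tau>^^i) x" using zO Ob_def by auto
    have "inj (\<tau>^^i)" using permutes_inj[OF permutes_funpow[OF tperm]] .
    moreover have "\<tau> z = (\<tau>^^i) (\<tau> x)" using z by (simp add: funpow_swap1)
    ultimately show ?thesis using z x by (metis injD)
  qed
  have comm: "\<tau> (\<sigma> y) = \<sigma> (\<tau> y)" for y
    unfolding \<tau>_def by (simp add: funpow_swap1)
  have cR: "card ({1..n} - Ob) \<le> 1" using card_Diff_subset[OF finite_subset[OF OA fin] OA] cOb np by simp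
  have sfix: "\<sigma> y = y" if y: "y \<notin> Ob" for y
  proof (cases "y \<in> {1..n}")
    case True
    have "\<tau> (\<sigma> y) = \<sigma> y" using comm[of y] R[OF y] by simp
    hence syO: "\<sigma> y \<notin> Ob" using Omv by blast
    have "\<sigma> y \<in> {1..n}" using True perm permutes_in_image by metis
    hence sub: "{y, \<sigma> y} \<subseteq> {1..n} - Ob" using True y syO by auto
    show ?thesis
    proof (rule ccontr)
      assume "\<sigma> y \<noteq> y"
      hence "card {y, \<sigma> y} = 2" by simp
      moreover have "card {y, \<sigma> y} \<le> card ({1..n} - Ob)" using sub by (intro card_mono) auto
      ultimately show False using cR by simp
    qed
  next
    case False
    then show ?thesis using perm permutes_not_in by metis
  qed
  have xO: "x \<in> Ob" using p2 Ob_def by (auto intro!: image_eqI[of _ _ 0])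
  have sxO: "\<sigma> x \<in> Ob"
  proof (rule ccontr)
    assume a: "\<sigma> x \<notin> Ob"
    hence "\<sigma> (\<sigma> x) = \<sigma> x" using sfix by blast
    hence "\<sigma> x = x" using permutes_inj[OF perm] by (metis injD)
    thus False using a xO by simp
  qed
  then obtain j where j: "\<sigma> x = (\<tau>^^j) x" using Ob_def by auto
  have st: "\<sigma> = \<tau>^^j"
  proof
    fix z
    show "\<sigma> z = (\<tau>^^j) z"
    proof (cases "z \<in> Ob")
      case True
      then obtain i where z: "z = (\<tau>^^i) x" using Ob_def by auto
      have ti: "\<tau>^^i = \<sigma>^^(k*i)" unfolding \<tau>_def by (simp add: funpow_mult)
      have "\<sigma> z = (\<sigma>^^(k*i)) (\<sigma> x)" using z ti by (simp add: funpow_swap1)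
      also have "\<dots> = (\<tau>^^i) ((\<tau>^^j) x)" using ti j by simp
      also have "\<dots> = (\<tau>^^j) z" using z by (metis comp_apply funpow_add add.commute)
      finally show ?thesis .
    next
      case False
      then show ?thesis using sfix R funpow_fix by metis
    qed
  qed
  have "\<sigma> ^^ p = id" unfolding st
  proof -
    have "(\<tau>^^j)^^p = (\<tau>^^p)^^j" by (simp add: funpow_mult mult.commute)
    thus "(\<tau>^^j)^^p = id" using tp by simp
  qed
  hence "m dvd p" using G.pow_eq_id[OF s, of p] m_def by (simp add: sym_pow sym_group_one)
  thus ?thesis using dv m_def by (simp add: dvd_antisym)
qed




context group begin

lemma gen_prime_eq:
  assumes x: "x \<in> carrier G" and pr: "Factorial_Ring.prime (p::nat)" and ox: "ord x = p"
    and y: "y \<in> generate G {x}" and y1: "y \<noteq> \<one>"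
  shows "generate G {y} = generate G {x}" "ord y = p"
proof -
  have p0: "ord x \<noteq> 0" using ox pr by auto
  obtain k::nat where k: "y = x [^] k" using generate_pow_nat[OF x p0] y by auto
  have yc: "y \<in> carrier G" using k x by simp
  have "ord y \<noteq> 1" using ord_eq_1[OF yc] y1 by simp
  hence k0: "k \<noteq> 0" and g: "p div gcd p k \<noteq> 1" using ord_pow_gen[OF x, of k] k ox by (auto split: if_splits)
  have "gcd p k dvd p" by simp
  hence "gcd p k = 1 \<or> gcd p k = p" using pr by (simp add: prime_nat_iff)
  hence gk: "gcd p k = 1" using g pr by (metis div_self prime_gt_0_nat less_not_refl2)
  show oy: "ord y = p" using ord_pow_gen[OF x, of k] k ox k0 gk by simp
  have sub: "generate G {y} \<subseteq> generate G {x}"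
    using generate_subgroup_incl[OF _ generate_is_subgroup] x y by auto
  have c1: "card (generate G {y}) = p" using generate_pow_card[OF yc] oy by simp
  have c2: "card (generate G {x}) = p" using generate_pow_card[OF x] ox by simp
  have "finite (generate G {x})" using c2 pr card_ge_0_finite prime_gt_0_nat by metis
  thus "generate G {y} = generate G {x}" using sub c1 c2 by (simp add: card_subset_eq)
qed

lemma pclass_alt:
  assumes x: "x \<in> carrier G" and pr: "Factorial_Ring.prime (p::nat)" and ox: "ord x = p"
  shows "pclass G x = generate G {x} - {\<one>}"
proof
  show "pclass G x \<subseteq> generate G {x} - {\<one>}"
  proof
    fix y assume "y \<in> pclass G x"
    hence yc: "y \<in> carrier G" and e: "generate G {y} = generate G {x}" unfolding pclass_def by auto
    have "y \<in> generate G {x}" using e generate.incl[of y "{y}" G] by auto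
    moreover have "y \<noteq> \<one>"
    proof
      assume "y = \<one>"
      hence "generate G {x} = {\<one>}" using e generate_one by simp
      hence "card (generate G {x}) = 1" by simp
      thus False using generate_pow_card[OF x] ox pr by auto
    qed
    ultimately show "y \<in> generate G {x} - {\<one>}" by simp
  qed
  show "generate G {x} - {\<one>} \<subseteq> pclass G x"
  proof
    fix y assume y: "y \<in> generate G {x} - {\<one>}"
    hence "y \<in> carrier G" using generate_incl[of "{x}"] x by auto
    thus "y \<in> pclass G x" using gen_prime_eq[OF x pr ox] y unfolding pclass_def by auto
  qed
qed

lemma card_pclass:
  assumes x: "x \<in> carrier G" and pr: "Factorial_Ring.prime (p::nat)" and ox: "ord x = p"
  shows "card (pclass G x) = p - 1"
proof -
  have c2: "card (generate G {x}) = p" using generate_pow_card[OF x] ox by simp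
  have "\<one> \<in> generate G {x}" by (rule generate.one)
  thus ?thesis using pclass_alt[OF assms] c2 by simp
qed

lemma pclass_eq:
  assumes "generate G {u} = generate G {w}"
  shows "pclass G u = pclass G w"
  using assms unfolding pclass_def by simp

lemma pclass_self: "x \<in> carrier G \<Longrightarrow> x \<in> pclass G x"
  unfolding pclass_def by simp

lemma ord_dvd_of_pow:
  assumes y: "y \<in> carrier G" and x: "x = y [^] (k::nat)"
  shows "ord x dvd ord y"
proof -
  have "x [^] ord y = y [^] (ord y * k)" using x y by (simp add: nat_pow_pow mult.commute)
  also have "\<dots> = \<one>" using y by (simp add: pow_eq_id)
  finally show ?thesis using pow_eq_id x y by simp
qed

lemma rpg_isolated:
  assumes fin: "finite (carrier G)" and pr: "Factorial_Ring.prime (p::nat)"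
    and H: "\<And>y. y \<in> carrier G \<Longrightarrow> p dvd ord y \<Longrightarrow> ord y = p"
    and psi: "\<psi> \<in> carrier G" and op: "ord \<psi> = p"
  shows "isolated_in (rpg_vertices G) (rpg_adj G) (pclass G \<psi>)"
  unfolding isolated_in_def
proof
  have "\<psi> \<noteq> \<one>" using op pr ord_eq_1[OF psi] by auto
  thus "pclass G \<psi> \<in> rpg_vertices G" using psi unfolding rpg_vertices_def by auto
  show "\<forall>w\<in>rpg_vertices G. \<not> rpg_adj G (pclass G \<psi>) w"
  proof (intro ballI notI)
    fix B assume B: "B \<in> rpg_vertices G" and adj: "rpg_adj G (pclass G \<psi>) B"
    obtain z where z: "z \<in> carrier G" "z \<noteq> \<one>" "B = pclass G z" using B unfolding rpg_vertices_def by auto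
    obtain x y where ne: "pclass G \<psi> \<noteq> B" and xA: "x \<in> pclass G \<psi>" and yB: "y \<in> B"
      and rel: "(\<exists>k::nat. k > 0 \<and> x = y [^] k) \<or> (\<exists>k::nat. k > 0 \<and> y = x [^] k)"
      using adj unfolding rpg_adj_def by blast
    have xc: "x \<in> carrier G" and gx: "generate G {x} = generate G {\<psi>}" using xA unfolding pclass_def by auto
    have yc: "y \<in> carrier G" and gy: "generate G {y} = generate G {z}" using yB z(3) unfolding pclass_def by auto
    have A: "pclass G \<psi> = pclass G x" using pclass_eq[OF gx] by simp
    have Bz: "B = pclass G y" using pclass_eq[OF gy] z(3) by simp
    have ox: "ord x = p" using generate_pow_card[OF xc] generate_pow_card[OF psi] gx op by simp
    have y1: "y \<noteq> \<one>"
    proof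
      assume "y = \<one>"
      hence "generate G {z} = {\<one>}" using gy generate_one by simp
      moreover have "z \<in> generate G {z}" by (rule generate.incl) simp
      ultimately show False using z(2) by simp
    qed
    have x1: "x \<noteq> \<one>" using ox pr ord_eq_1[OF xc] by auto
    from rel show False
    proof
      assume "\<exists>k::nat. k > 0 \<and> x = y [^] k"
      then obtain k::nat where k: "x = y [^] k" by blast
      have "p dvd ord y" using ord_dvd_of_pow[OF yc k] ox by simp
      hence oy: "ord y = p" using H[OF yc] by simp
      have "x \<in> generate G {y}" using generate_pow_nat[OF yc] oy pr k by auto
      hence "generate G {x} = generate G {y}" using gen_prime_eq(1)[OF yc pr oy _ x1] by simp
      thus False using A Bz ne pclass_eq by metis
    next
      assume "\<exists>k::nat. k > 0 \<and> y = x [^] k"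
      then obtain k::nat where k: "y = x [^] k" by blast
      have "y \<in> generate G {x}" using generate_pow_nat[OF xc] ox pr k by auto
      hence "generate G {y} = generate G {x}" using gen_prime_eq(1)[OF xc pr ox _ y1] by simp
      thus False using A Bz ne pclass_eq by metis
    qed
  qed
qed

end




lemma iso_comp:
  assumes sym: "\<And>a b. adj a b \<Longrightarrow> adj b a" and iso: "isolated_in V adj v"
  shows "component_of V adj v = {v}"
    and "w \<in> V \<Longrightarrow> v \<in> component_of V adj w \<Longrightarrow> w = v"
proof -
  let ?R = "\<lambda>a b. a \<in> V \<and> b \<in> V \<and> adj a b"
  have "x = v" if "?R\<^sup>*\<^sup>* v x" for x
    using that by (induct rule: rtranclp_induct) (use iso in \<open>auto simp: isolated_in_def\<close>)
  thus "component_of V adj v = {v}" unfolding component_of_def by auto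
  assume "w \<in> V" "v \<in> component_of V adj w"
  hence r: "?R\<^sup>*\<^sup>* w v" unfolding component_of_def by auto
  show "w = v"
  proof (cases rule: rtranclp.cases[OF r])
    case (2 _ y _)
    hence "y \<in> V" "adj v y" using sym by auto
    thus ?thesis using iso unfolding isolated_in_def by auto
  qed auto
qed

lemma comp_in_V:
  assumes "w \<in> V" "A \<in> component_of V adj w" shows "A \<in> V"
proof -
  let ?R = "\<lambda>a b. a \<in> V \<and> b \<in> V \<and> adj a b"
  have r: "?R\<^sup>*\<^sup>* w A" using assms unfolding component_of_def by auto
  show ?thesis by (cases rule: rtranclp.cases[OF r]) (use assms in auto)
qed

lemma msum_pos0: "\<forall>m\<in>#M. (m::nat) > 0 \<Longrightarrow> sum_mset M = 0 \<Longrightarrow> M = {#}"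
  by (cases M) auto

lemma msum_pos1: "\<forall>m\<in>#M. (m::nat) > 0 \<Longrightarrow> sum_mset M = 1 \<Longrightarrow> M = {#1#}"
proof (cases M)
  case (add x M')
  assume a: "\<forall>m\<in>#M. m > 0" "sum_mset M = 1"
  hence pos: "\<forall>m\<in>#M'. m > 0" and x0: "x > 0" and s: "x + sum_mset M' = 1" using add by auto
  have "M' = {#}"
  proof (rule ccontr)
    assume "M' \<noteq> {#}" then obtain y M'' where "M' = add_mset y M''" by (cases M') auto
    thus False using pos x0 s by auto
  qed
  thus ?thesis using add s by simp
qed auto

lemma tg_iso:
  assumes pr: "Factorial_Ring.prime (p::nat)" and n: "n = p \<or> n = p + 1"
  shows "isolated_in (tg_vertices n) tg_adj (replicate_mset (n - p) 1 + {#p#})"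
proof -
  define T where "T = replicate_mset (n - p) 1 + {#p#}"
  have p2: "p \<ge> 2" using pr prime_ge_2_nat by blast
  have np: "n - p = 0 \<or> n - p = 1" using n by auto
  have Tc: "T = {#p#} \<or> T = {#1, p#}" using np T_def by auto
  have cT: "count T p = 1" using p2 T_def by auto
  have Tv: "T \<in> tg_vertices n"
  proof -
    have "is_partition n T" using n p2 unfolding is_partition_def T_def by auto
    moreover have "T \<noteq> replicate_mset n 1" using p2 T_def
      by (metis add_mset_add_single in_replicate_mset union_single_eq_member less_irrefl_nat one_less_numeral_iff semiring_norm(76) order_less_le_trans one_less_numeral_iff)
    ultimately show ?thesis unfolding tg_vertices_def by simp
  qed
  have "\<not> tg_adj T W" if W: "W \<in> tg_vertices n" for W
  proof
    assume "tg_adj T W"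
    then obtain a::nat where ne: "T \<noteq> W" and a: "a > 0" and rel: "W = type_pow T a \<or> T = type_pow W a"
      unfolding tg_adj_def by blast
    have Wp: "\<forall>m\<in>#W. m > 0" "sum_mset W = n" "W \<noteq> replicate_mset n 1"
      using W unfolding tg_vertices_def is_partition_def by auto
    from rel show False
    proof
      assume Wt: "W = type_pow T a"
      have g: "gcd a p = 1 \<or> gcd a p = p" using pr by (simp add: prime_nat_iff)
      show False
      proof (cases "gcd a p = 1")
        case True
        hence "W = T" using Wt Tc by (auto simp: type_pow_def)
        thus False using ne by simp
      next
        case False
        hence gp: "gcd a p = p" using g by simp
        have "W = replicate_mset n 1" using Wt gp n p2 T_def
          by (auto simp: type_pow_def)
        thus False using Wp by simp
      qed
    next
      assume Tt: "T = type_pow W a"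
      let ?f = "\<lambda>m. replicate_mset (gcd a m) (m div gcd a m)"
      have "p \<in># T" using T_def by simp
      hence "p \<in># sum_mset (image_mset ?f W)" using Tt unfolding type_pow_def by simp
      then obtain m where mW: "m \<in># W" and pm: "p \<in># ?f m" by auto
      obtain W' where W': "W = add_mset m W'" using mW by (metis multi_member_split)
      have g0: "gcd a m > 0" using a by simp
      have md: "m div gcd a m = p" using pm by (auto split: if_splits)
      have "T = ?f m + type_pow W' a" using Tt W' unfolding type_pow_def by simp
      hence "count T p \<ge> count (?f m) p" by simp
      hence "gcd a m \<le> 1" using cT md by simp
      hence "gcd a m = 1" using g0 by linarith
      hence mp: "m = p" using md by simp
      have "sum_mset W' = n - p" using Wp(2) W' mp by simp
      moreover have "\<forall>x\<in>#W'. x > 0" using Wp(1) W' by simp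
      ultimately have "W' = replicate_mset (n - p) 1"
        using np msum_pos0[of W'] msum_pos1[of W'] by auto
      hence "W = T" using W' mp T_def by simp
      thus False using ne by simp
    qed
  qed
  thus ?thesis using Tv unfolding isolated_in_def T_def by blast
qed




lemma X_eq:
  assumes pr: "Factorial_Ring.prime (p::nat)"
  shows "{\<sigma> \<in> carrier (sym_group n). group.ord (sym_group n) \<sigma> = p}
       = {\<sigma>. \<sigma> permutes {1..n} \<and> \<sigma> \<noteq> id \<and> \<sigma> ^^ p = id}"
  using ord_p_iff[OF pr] sym_group_carrier by blast

lemma count_X:
  assumes pr: "Factorial_Ring.prime (p::nat)" and n: "n = p \<or> n = p + 1"
  shows "card {\<sigma>::nat\<Rightarrow>nat. \<sigma> permutes {1..n} \<and> \<sigma> \<noteq> id \<and> \<sigma> ^^ p = id}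
       = (if n = p then fact (p - 1) else (p + 1) * fact (p - 1))"
proof -
  have p2: "p \<ge> 2" using pr prime_ge_2_nat by blast
  define S where "S = (\<lambda>B. {\<sigma>::nat\<Rightarrow>nat. \<sigma> permutes B \<and> \<sigma> \<noteq> id \<and> \<sigma> ^^ p = id})"
  show ?thesis
  proof (cases "n = p")
    case True
    thus ?thesis using count_cycles[OF pr, of "{1..n}" 1] p2 by simp
  next
    case False
    hence np: "n = p + 1" using n by simp
    have cS: "card (S ({1..n} - {f})) = fact (p - 1)" if f: "f \<in> {1..n}" for f
    proof -
      have c: "card ({1..n} - {f}) = p" using f np by simp
      hence "{1..n} - {f} \<noteq> {}" using p2 by (metis card.empty not_numeral_le_zero)
      then obtain a where "a \<in> {1..n} - {f}" by blast
      thus ?thesis using count_cycles[OF pr _ c] unfolding S_def by simp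
    qed
    have U: "S {1..n} = (\<Union>f\<in>{1..n}. S ({1..n} - {f}))"
    proof
      show "S {1..n} \<subseteq> (\<Union>f\<in>{1..n}. S ({1..n} - {f}))"
      proof
        fix \<sigma> assume s: "\<sigma> \<in> S {1..n}"
        hence perm: "\<sigma> permutes {1..n}" and ni: "\<sigma> \<noteq> id" and sp: "\<sigma> ^^ p = id" unfolding S_def by auto
        obtain x where x: "\<sigma> x \<noteq> x" using ni by (metis eq_id_iff)
        have xA: "x \<in> {1..n}" using x perm permutes_not_in by metis
        let ?O = "(\<lambda>i. (\<sigma>^^i) x) ` {..<p}"
        have cO: "card ?O = p" using orbit_card[OF pr sp x permutes_imp_permutation[OF _ perm]] by simp
        have "{1..n} - ?O \<noteq> {}"
        proof
          assume "{1..n} - ?O = {}" hence "{1..n} \<subseteq> ?O" by blast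
          hence "card {1..n} \<le> card ?O" by (intro card_mono) auto
          thus False using cO np by simp
        qed
        then obtain f where f: "f \<in> {1..n}" "f \<notin> ?O" by blast
        have "\<sigma> f = f" using rest_fixed[OF pr perm _ _ sp x f(2)] np by simp
        hence "\<sigma> permutes {1..n} - {f}" by (intro permutes_superset[OF perm]) auto
        thus "\<sigma> \<in> (\<Union>f\<in>{1..n}. S ({1..n} - {f}))" using f ni sp unfolding S_def by blast
      qed
      show "(\<Union>f\<in>{1..n}. S ({1..n} - {f})) \<subseteq> S {1..n}"
        unfolding S_def using permutes_subset by blast
    qed
    have disj: "S ({1..n} - {f}) \<inter> S ({1..n} - {g}) = {}" if fg: "f \<in> {1..n}" "g \<in> {1..n}" "f \<noteq> g" for f g
    proof (rule ccontr)
      assume "S ({1..n} - {f}) \<inter> S ({1..n} - {g}) \<noteq> {}"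
      then obtain \<sigma> where s1: "\<sigma> \<in> S ({1..n} - {f})" and s2: "\<sigma> \<in> S ({1..n} - {g})" by blast
      have "\<sigma> f = f" using s1 permutes_not_in unfolding S_def by fastforce
      moreover have "\<sigma> f \<noteq> f"
        using full_cycle(1)[OF pr _ _ _ _ _, of \<sigma> "{1..n} - {g}" f] s2 fg np unfolding S_def by auto
      ultimately show False by simp
    qed
    have fin: "finite (S ({1..n} - {f}))" for f
      unfolding S_def by (rule finite_subset[OF _ finite_permutations[of "{1..n} - {f}"]]) auto
    have "card (S {1..n}) = (\<Sum>f\<in>{1..n}. card (S ({1..n} - {f})))"
      unfolding U by (rule card_UN_disjoint) (use fin disj in auto)
    also have "\<dots> = (\<Sum>f\<in>{1..n}. fact (p - 1))" using cS by simp
    also have "\<dots> = (p + 1) * fact (p - 1)" using np by simp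
    finally show ?thesis using False unfolding S_def by simp
  qed
qed




theorem lemma7p3:
  fixes n p :: nat
  assumes "Factorial_Ring.prime p" and "n \<ge> 2" and "n = p \<or> n = p + 1"
  shows "isolated_in (og_vertices (sym_group n)) og_adj p
       \<and> isolated_in (tg_vertices n) tg_adj (replicate_mset (n - p) 1 + {#p#})
       \<and> (\<forall>\<psi>\<in>carrier (sym_group n). group.ord (sym_group n) \<psi> = p \<longrightarrow>
            isolated_in (rpg_vertices (sym_group n)) (rpg_adj (sym_group n)) (pclass (sym_group n) \<psi>))
       \<and> card {C \<in> components (rpg_vertices (sym_group n)) (rpg_adj (sym_group n)).
                 \<exists>A\<in>C. \<exists>\<psi>\<in>A. group.ord (sym_group n) \<psi> = p}
         = (if n = p then fact (p - 2) else (p + 1) * fact (p - 2))"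
proof -
  note pr = assms(1)
  define Xs where "Xs = {\<sigma> \<in> carrier (sym_group n). group.ord (sym_group n) \<sigma> = p}"
  interpret Gr: group "sym_group n" by (rule sym_group_is_group)
  have p2: "p \<ge> 2" using pr prime_ge_2_nat by blast
  have np: "n \<le> p + 1" using assms(3) by auto
  have H: "\<And>y. y \<in> carrier (sym_group n) \<Longrightarrow> p dvd Gr.ord y \<Longrightarrow> Gr.ord y = p" using main_M[OF pr np] by blast
  have cX: "card Xs = (if n = p then fact (p - 1) else (p + 1) * fact (p - 1))"
    using count_X[OF pr assms(3)] X_eq[OF pr, of n] Xs_def by simp
  have "card Xs > 0" using cX by simp
  then obtain \<psi>0 where psi0: "\<psi>0 \<in> Xs" by (metis card.empty less_irrefl ex_in_conv)
  have og: "isolated_in (og_vertices (sym_group n)) og_adj p"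
    unfolding isolated_in_def og_vertices_def og_adj_def
  proof
    show "p \<in> {Gr.ord x |x. x \<in> carrier (sym_group n)} - {1}" using psi0 p2 Xs_def by auto
    show "\<forall>w\<in>{Gr.ord x |x. x \<in> carrier (sym_group n)} - {1}. \<not> (p \<noteq> w \<and> (p dvd w \<or> w dvd p))"
    proof (intro ballI notI)
      fix w assume w: "w \<in> {Gr.ord x |x. x \<in> carrier (sym_group n)} - {1}" and a: "p \<noteq> w \<and> (p dvd w \<or> w dvd p)"
      then obtain y where y: "y \<in> carrier (sym_group n)" "w = Gr.ord y" "w \<noteq> 1" by auto
      from a show False
      proof (elim conjE disjE)
        assume "p dvd w" thus False using H y a by auto
      next
        assume "w dvd p" thus False using pr y a by (metis prime_nat_iff)
      qed
    qed
  qed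
  have tg: "isolated_in (tg_vertices n) tg_adj (replicate_mset (n - p) 1 + {#p#})"
    using tg_iso[OF pr assms(3)] .
  have iso: "isolated_in (rpg_vertices (sym_group n)) (rpg_adj (sym_group n)) (pclass (sym_group n) \<psi>)"
    if "\<psi> \<in> carrier (sym_group n)" "Gr.ord \<psi> = p" for \<psi>
    using Gr.rpg_isolated[OF fin_sym pr H that] by blast
  let ?V = "rpg_vertices (sym_group n)" and ?adj = "rpg_adj (sym_group n)"
  have sym: "\<And>A B. ?adj A B \<Longrightarrow> ?adj B A" unfolding rpg_adj_def by blast
  have Ceq: "{C \<in> components ?V ?adj. \<exists>A\<in>C. \<exists>\<psi>\<in>A. Gr.ord \<psi> = p} = (\<lambda>\<psi>. {pclass (sym_group n) \<psi>}) ` Xs"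
  proof
    show "{C \<in> components ?V ?adj. \<exists>A\<in>C. \<exists>\<psi>\<in>A. Gr.ord \<psi> = p} \<subseteq> (\<lambda>\<psi>. {pclass (sym_group n) \<psi>}) ` Xs"
    proof
      fix C assume "C \<in> {C \<in> components ?V ?adj. \<exists>A\<in>C. \<exists>\<psi>\<in>A. Gr.ord \<psi> = p}"
      then obtain w A \<psi> where w: "w \<in> ?V" and C: "C = component_of ?V ?adj w"
        and AC: "A \<in> C" and psiA: "\<psi> \<in> A" and op: "Gr.ord \<psi> = p"
        unfolding components_def by blast
      have AV: "A \<in> ?V" using comp_in_V[OF w] AC C by blast
      then obtain z where z: "z \<in> carrier (sym_group n)" "A = pclass (sym_group n) z" unfolding rpg_vertices_def by auto
      have psic: "\<psi> \<in> carrier (sym_group n)" and gz: "generate (sym_group n) {\<psi>} = generate (sym_group n) {z}"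
        using psiA z(2) unfolding pclass_def by auto
      have Ap: "A = pclass (sym_group n) \<psi>" using Gr.pclass_eq[OF gz] z(2) by simp
      have isoA: "isolated_in ?V ?adj A" using iso[OF psic op] Ap by simp
      have "w = A" using iso_comp(2)[OF sym isoA w] AC C by blast
      hence "C = {A}" using iso_comp(1)[OF sym isoA] C by simp
      moreover have "\<psi> \<in> Xs" using psic op Xs_def by simp
      ultimately show "C \<in> (\<lambda>\<psi>. {pclass (sym_group n) \<psi>}) ` Xs" using Ap by blast
    qed
    show "(\<lambda>\<psi>. {pclass (sym_group n) \<psi>}) ` Xs \<subseteq> {C \<in> components ?V ?adj. \<exists>A\<in>C. \<exists>\<psi>\<in>A. Gr.ord \<psi> = p}"
    proof
      fix C assume "C \<in> (\<lambda>\<psi>. {pclass (sym_group n) \<psi>}) ` Xs"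
      then obtain \<psi> where psi: "\<psi> \<in> Xs" and C: "C = {pclass (sym_group n) \<psi>}" by blast
      have psic: "\<psi> \<in> carrier (sym_group n)" and op: "Gr.ord \<psi> = p" using psi Xs_def by auto
      have isoA: "isolated_in ?V ?adj (pclass (sym_group n) \<psi>)" using iso[OF psic op] .
      have V: "pclass (sym_group n) \<psi> \<in> ?V" using isoA unfolding isolated_in_def by simp
      have "C \<in> components ?V ?adj" unfolding components_def
        using iso_comp(1)[OF sym isoA] C V by (metis image_eqI)
      moreover have "\<psi> \<in> pclass (sym_group n) \<psi>" using Gr.pclass_self[OF psic] .
      ultimately show "C \<in> {C \<in> components ?V ?adj. \<exists>A\<in>C. \<exists>\<psi>\<in>A. Gr.ord \<psi> = p}" using C op by blast
    qed
  qed
  have c1: "card ((\<lambda>\<psi>. {pclass (sym_group n) \<psi>}) ` Xs) = card (pclass (sym_group n) ` Xs)"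
  proof -
    have "(\<lambda>\<psi>. {pclass (sym_group n) \<psi>}) ` Xs = (\<lambda>A. {A}) ` (pclass (sym_group n) ` Xs)" by (simp add: image_image)
    thus ?thesis by (simp add: card_image)
  qed
  have finXs: "finite Xs" using fin_sym Xs_def by simp
  have part: "(p - 1) * card (pclass (sym_group n) ` Xs) = card Xs"
  proof -
    have U: "\<Union> (pclass (sym_group n) ` Xs) = Xs"
    proof
      show "\<Union> (pclass (sym_group n) ` Xs) \<subseteq> Xs"
      proof
        fix y assume "y \<in> \<Union> (pclass (sym_group n) ` Xs)"
        then obtain \<psi> where psi: "\<psi> \<in> Xs" and y: "y \<in> pclass (sym_group n) \<psi>" by blast
        have yc: "y \<in> carrier (sym_group n)" and g: "generate (sym_group n) {y} = generate (sym_group n) {\<psi>}" using y unfolding pclass_def by auto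
        have psic: "\<psi> \<in> carrier (sym_group n)" and op: "Gr.ord \<psi> = p" using psi Xs_def by auto
        have "Gr.ord y = p" using Gr.generate_pow_card[OF yc] Gr.generate_pow_card[OF psic] g op by simp
        thus "y \<in> Xs" using yc Xs_def by simp
      qed
      show "Xs \<subseteq> \<Union> (pclass (sym_group n) ` Xs)" using Gr.pclass_self Xs_def by blast
    qed
    have "(p - 1) * card (pclass (sym_group n) ` Xs) = card (\<Union> (pclass (sym_group n) ` Xs))"
    proof (rule card_partition)
      show "finite (pclass (sym_group n) ` Xs)" using finXs by simp
      show "finite (\<Union> (pclass (sym_group n) ` Xs))" using U finXs by simp
      show "\<And>c. c \<in> pclass (sym_group n) ` Xs \<Longrightarrow> card c = p - 1"
        using Gr.card_pclass[OF _ pr] Xs_def by auto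
      show "\<And>c1 c2. c1 \<in> pclass (sym_group n) ` Xs \<Longrightarrow> c2 \<in> pclass (sym_group n) ` Xs \<Longrightarrow> c1 \<noteq> c2 \<Longrightarrow> c1 \<inter> c2 = {}"
      proof -
        fix c1 c2 assume "c1 \<in> pclass (sym_group n) ` Xs" "c2 \<in> pclass (sym_group n) ` Xs" "c1 \<noteq> c2"
        then obtain a b where ab: "c1 = pclass (sym_group n) a" "c2 = pclass (sym_group n) b" by blast
        show "c1 \<inter> c2 = {}"
        proof (rule ccontr)
          assume "c1 \<inter> c2 \<noteq> {}"
          then obtain z where "z \<in> pclass (sym_group n) a" "z \<in> pclass (sym_group n) b" using ab by blast
          hence "generate (sym_group n) {a} = generate (sym_group n) {b}" unfolding pclass_def by auto
          thus False using Gr.pclass_eq ab \<open>c1 \<noteq> c2\<close> by metis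
        qed
      qed
    qed
    thus ?thesis using U by simp
  qed
  have fp: "fact (p - 1) = (p - 1) * fact (p - 2)"
  proof -
    have "p - 1 = Suc (p - 2)" using p2 by simp
    thus ?thesis by (metis fact_Suc of_nat_id)
  qed
  have p1: "p - 1 > 0" using p2 by simp
  have fin: "card (pclass (sym_group n) ` Xs) = (if n = p then fact (p - 2) else (p + 1) * fact (p - 2))"
  proof (cases "n = p")
    case True
    hence "(p - 1) * card (pclass (sym_group n) ` Xs) = (p - 1) * fact (p - 2)" using part cX fp by simp
    thus ?thesis using p1 True by simp
  next
    case False
    have "card Xs = (p + 1) * ((p - 1) * fact (p - 2))" using cX fp False by simp
    also have "\<dots> = (p - 1) * ((p + 1) * fact (p - 2))" by (metis mult.left_commute)
    finally have "(p - 1) * card (pclass (sym_group n) ` Xs) = (p - 1) * ((p + 1) * fact (p - 2))" using part by simp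
    thus ?thesis using p1 False by simp
  qed
  show ?thesis using og tg iso Ceq c1 fin by simp
qed


end
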